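(* Let $d\ge1$, $q\ge1$, let $\mathbf c_1,\dots,\mathbf c_q\in\mathbb R^d$, $w_1,\dots,w_q>0$, $c_s>0$ be a lattice satisfying the isotropy conditions stated in the context, and let $\mathbf h:\mathbb R^d\to\mathbb R^q$, $h_i(\mathbf u)=\sqrt{w_i}\big(1+\frac{\mathbf c_i\cdot\mathbf u}{2c_s^2}+\frac{(\mathbf c_i\cdot\mathbf u)^2}{8c_s^4}-\frac{\|\mathbf u\|^2}{4c_s^2}\big)$, and $\mathbf g(\rho,\mathbf u)=\sqrt\rho\,\mathbf h(\mathbf u)$ for $\rho\ge0$, $\mathbf u\in\mathbb R^d$. Let $\mathbf H=\nabla^2\mathbf h$ be the (constant) Hessian tensor, $H_{ikl}=\partial_k\partial_l h_i$, and $\|\mathbf H\|_2=\sup_{\|\mathbf a\|=\|\mathbf b\|=1}\big\|\big(\sum_{k,l}H_{ikl}a_kb_l\big)_{i=1}^q\big\|$. Fix a reference velocity $\hat{\mathbf u}\in\mathbb R^d$ such that $\bar J=[\mathbf h(\hat{\mathbf u}),\partial_1\mathbf h(\hat{\mathbf u}),\dots,\partial_d\mathbf h(\hat{\mathbf u})]\in\mathbb R^{q\times(d+1)}$ has full column rank, let $\hat V$ be its column space and $\mathcal D=\bar J(\bar J^\top\bar J)^{-1}\bar J^\top$ the orthogonal projector onto $\hat V$. Let $\tilde{\mathbf g}\in\mathbb R^q$ be arbitrary and $\hat\rho>0$ a reference density. Define $\mathcal E^\perp=\inf_{\rho\ge0,\,\mathbf u\in\mathbb R^d}\|\mathcal D\tilde{\mathbf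 g}-\mathbf g(\rho,\mathbf u)\|$, $\Delta=\|\sqrt{\hat\rho}\,\mathbf h(\hat{\mathbf u})-\tilde{\mathbf g}\|$, and $\beta=1/\sigma_{\min}(\nabla\mathbf g(\hat\rho,\hat{\mathbf u}))$, where $\nabla\mathbf g(\hat\rho,\hat{\mathbf u})=[\partial_\rho\mathbf g,\partial_{u_1}\mathbf g,\dots,\partial_{u_d}\mathbf g](\hat\rho,\hat{\mathbf u})\in\mathbb R^{q\times(d+1)}$ (which has full column rank) and $\sigma_{\min}$ is its smallest singular value. Let $\mathcal F(\rho,\mathbf u)=\mathcal D\,\mathbf g(\rho,\mathbf u)$ with Jacobian $D_{\mathcal F}$, let $\mathbf z_0=\nabla\mathbf g(\hat\rho,\hat{\mathbf u})^{+}\big(\mathcal F(\hat\rho,\hat{\mathbf u})-\mathcal D\tilde{\mathbf g}\big)$ (with $^{+}$ the Moore–Penrose pseudoinverse), $r=\|\mathbf z_0\|$, $(\rho_1,\mathbf u_1)=(\hat\rho,\hat{\mathbf u})-\mathbf z_0$, and $B$ the open ball in $\mathbb R^{1+d}$ of radius $r$ centered at $(\rho_1,\mathbf u_1)$. Assume (Newton–Kantorovich conditions) that $B\subset(0,\infty)\times\mathbb R^d$, that $D_{\mathcal F}$ is Lipschitz on $B$ with constant $\mu$ (in operator norm), and that $2\beta\mu r\le1$. Then $$\mathcal E^\perp\le 2\beta^2\Delta^2\|\mathbf H\|_2\sqrt{\hat\rho+2\beta\Delta}.$$ Furthermore, if $\mathbf h(\hat{\mathbf u})^\top\tilde{\mathbf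 g}>0$, then the choice $\sqrt{\hat\rho}=\mathbf h(\hat{\mathbf u})^\top\tilde{\mathbf g}/\|\mathbf h(\hat{\mathbf u})\|^2$ minimizes $\Delta$ over $\hat\rho>0$, and for this choice $\Delta=\|\tilde{\mathbf g}\|\,|\sin\theta|$, where $\cos\theta=\dfrac{\mathbf h(\hat{\mathbf u})^\top\tilde{\mathbf g}}{\|\mathbf h(\hat{\mathbf u})\|\,\|\tilde{\mathbf g}\|}$.
   Context: Isotropy conditions on the lattice: $\sum_i w_i=1$, $\sum_i w_i c_{ik}c_{il}=c_s^2\delta_{kl}$, $\sum_i w_i c_{ik}c_{il}c_{ip}c_{iq}=c_s^4(\delta_{kl}\delta_{pq}+\delta_{kp}\delta_{lq}+\delta_{kq}\delta_{lp})$, and all weighted velocity moments of orders 1, 3 and 5 vanish. Here $\mathbf g(\rho,\mathbf u)$ parametrizes the (second-order truncated) manifold of square-root equilibrium distributions, $\mathcal D$ is the "denoising" projector onto its tangent space at reference velocity $\hat{\mathbf u}$, and $\mathcal E^\perp$ is the distance from $\mathcal D\tilde{\mathbf g}$ to that manifold. *)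

theory Defs
  imports "HOL-Analysis.Analysis"
begin

definition kd :: "'a \<Rightarrow> 'a \<Rightarrow> real" where
  "kd k l = (if k = l then 1 else 0)"

definition lattice_isotropic :: "('q::finite \<Rightarrow> real^'d) \<Rightarrow> ('q \<Rightarrow> real) \<Rightarrow> real \<Rightarrow> bool" where
  "lattice_isotropic c w cs \<longleftrightarrow>
     cs > 0 \<and> (\<forall>i. w i > 0) \<and> (\<Sum>i\<in>UNIV. w i) = 1 \<and>
     (\<forall>k. (\<Sum>i\<in>UNIV. w i * c i $ k) = 0) \<and>
     (\<forall>k l. (\<Sum>i\<in>UNIV. w i * c i $ k * c i $ l) = cs^2 * kd k l) \<and>
     (\<forall>k l p. (\<Sum>i\<in>UNIV. w i * c i $ k * c i $ l * c i $ p) = 0) \<and>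
     (\<forall>k l p m. (\<Sum>i\<in>UNIV. w i * c i $ k * c i $ l * c i $ p * c i $ m)
                 = cs^4 * (kd k l * kd p m + kd k p * kd l m + kd k m * kd l p)) \<and>
     (\<forall>k l p m n. (\<Sum>i\<in>UNIV. w i * c i $ k * c i $ l * c i $ p * c i $ m * c i $ n) = 0)"

text \<open>h(u), second-order truncated square-root equilibrium shape.\<close>
definition heq :: "('q::finite \<Rightarrow> real^'d::finite) \<Rightarrow> ('q \<Rightarrow> real) \<Rightarrow> real \<Rightarrow> real^'d \<Rightarrow> real^'q" where
  "heq c w cs u = (\<chi> i. sqrt (w i) * (1 + (c i \<bullet> u) / (2 * cs^2) + (c i \<bullet> u)^2 / (8 * cs^4)
                                       - (norm u)^2 / (4 * cs^2)))"

definition geq :: "('q::finite \<Rightarrow> real^'d::finite) \<Rightarrow> ('q \<Rightarrow> real) \<Rightarrow> real \<Rightarrow> real \<times> (real^'d) \<Rightarrow> real^'q" where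
  "geq c w cs = (\<lambda>(\<rho>, u). sqrt \<rho> *\<^sub>R heq c w cs u)"

text \<open>||H||_2 = sup over unit a, b of || (sum_{k,l} H_ikl a_k b_l)_i ||, where H is the
  (constant) Hessian of h; evaluated at 0.\<close>
definition hess_norm :: "('q::finite \<Rightarrow> real^'d::finite) \<Rightarrow> ('q \<Rightarrow> real) \<Rightarrow> real \<Rightarrow> real" where
  "hess_norm c w cs = Sup {norm (frechet_derivative (\<lambda>u. frechet_derivative (heq c w cs) (at u) b) (at 0) a)
                           | a b. norm a = 1 \<and> norm b = 1}"

definition Jbar :: "('q::finite \<Rightarrow> real^'d::finite) \<Rightarrow> ('q \<Rightarrow> real) \<Rightarrow> real \<Rightarrow> real^'d \<Rightarrow> real \<times> (real^'d) \<Rightarrow> real^'q" where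
  "Jbar c w cs uh = (\<lambda>(a, b). a *\<^sub>R heq c w cs uh + frechet_derivative (heq c w cs) (at uh) b)"

definition orth_proj :: "'a::euclidean_space set \<Rightarrow> 'a \<Rightarrow> 'a" where
  "orth_proj S x = (THE p. p \<in> S \<and> (\<forall>v\<in>S. (x - p) \<bullet> v = 0))"

definition Dproj :: "('q::finite \<Rightarrow> real^'d::finite) \<Rightarrow> ('q \<Rightarrow> real) \<Rightarrow> real \<Rightarrow> real^'d \<Rightarrow> real^'q \<Rightarrow> real^'q" where
  "Dproj c w cs uh = orth_proj (range (Jbar c w cs uh))"

definition sigma_min :: "('a::euclidean_space \<Rightarrow> 'b::euclidean_space) \<Rightarrow> real" where
  "sigma_min A = Inf {norm (A z) | z. norm z = 1}"

definition lsq_sol :: "('a::euclidean_space \<Rightarrow> 'b::euclidean_space) \<Rightarrow> 'b \<Rightarrow> 'a \<Rightarrow> bool" where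
  "lsq_sol A y z \<longleftrightarrow> (\<forall>z'. norm (A z - y) \<le> norm (A z' - y))"

definition pinv :: "('a::euclidean_space \<Rightarrow> 'b::euclidean_space) \<Rightarrow> 'b \<Rightarrow> 'a" where
  "pinv A y = (THE z. lsq_sol A y z \<and> (\<forall>z'. lsq_sol A y z' \<longrightarrow> norm z \<le> norm z'))"

definition Eperp :: "('q::finite \<Rightarrow> real^'d::finite) \<Rightarrow> ('q \<Rightarrow> real) \<Rightarrow> real \<Rightarrow> real^'d \<Rightarrow> real^'q \<Rightarrow> real" where
  "Eperp c w cs uh gt = Inf {norm (Dproj c w cs uh gt - geq c w cs (\<rho>, u)) | \<rho> u. \<rho> \<ge> 0}"

definition Delta :: "('q::finite \<Rightarrow> real^'d::finite) \<Rightarrow> ('q \<Rightarrow> real) \<Rightarrow> real \<Rightarrow> real^'d \<Rightarrow> real^'q \<Rightarrow> real \<Rightarrow> real" where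
  "Delta c w cs uh gt \<rho>h = norm (sqrt \<rho>h *\<^sub>R heq c w cs uh - gt)"

definition nabla_g :: "('q::finite \<Rightarrow> real^'d::finite) \<Rightarrow> ('q \<Rightarrow> real) \<Rightarrow> real \<Rightarrow> real \<times> (real^'d) \<Rightarrow> real \<times> (real^'d) \<Rightarrow> real^'q" where
  "nabla_g c w cs x = frechet_derivative (geq c w cs) (at x)"

definition beta :: "('q::finite \<Rightarrow> real^'d::finite) \<Rightarrow> ('q \<Rightarrow> real) \<Rightarrow> real \<Rightarrow> real \<times> (real^'d) \<Rightarrow> real" where
  "beta c w cs x = 1 / sigma_min (nabla_g c w cs x)"

definition Fmap :: "('q::finite \<Rightarrow> real^'d::finite) \<Rightarrow> ('q \<Rightarrow> real) \<Rightarrow> real \<Rightarrow> real^'d \<Rightarrow> real \<times> (real^'d) \<Rightarrow> real^'q" where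
  "Fmap c w cs uh = (\<lambda>x. Dproj c w cs uh (geq c w cs x))"

definition z0 :: "('q::finite \<Rightarrow> real^'d::finite) \<Rightarrow> ('q \<Rightarrow> real) \<Rightarrow> real \<Rightarrow> real^'d \<Rightarrow> real^'q \<Rightarrow> real \<Rightarrow> real \<times> (real^'d)" where
  "z0 c w cs uh gt \<rho>h = pinv (nabla_g c w cs (\<rho>h, uh)) (Fmap c w cs uh (\<rho>h, uh) - Dproj c w cs uh gt)"

definition NK_conditions :: "('q::finite \<Rightarrow> real^'d::finite) \<Rightarrow> ('q \<Rightarrow> real) \<Rightarrow> real \<Rightarrow> real^'d \<Rightarrow> real^'q \<Rightarrow> real \<Rightarrow> real \<Rightarrow> bool" where
  "NK_conditions c w cs uh gt \<rho>h \<mu> \<longleftrightarrow>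
     (let r = norm (z0 c w cs uh gt \<rho>h);
          B = ball ((\<rho>h, uh) - z0 c w cs uh gt \<rho>h) r;
          DF = (\<lambda>x. frechet_derivative (Fmap c w cs uh) (at x))
      in B \<subseteq> {0<..} \<times> UNIV \<and>
         (\<forall>x\<in>B. \<forall>y\<in>B. onorm (\<lambda>v. DF x v - DF y v) \<le> \<mu> * norm (x - y)) \<and>
         2 * beta c w cs (\<rho>h, uh) * \<mu> * r \<le> 1)"

end

theory Submission
  imports Defs
begin

definition Dh :: "('q::finite \<Rightarrow> real^'d::finite) \<Rightarrow> ('q \<Rightarrow> real) \<Rightarrow> real \<Rightarrow> real^'d \<Rightarrow> real^'d \<Rightarrow> real^'q" where
  "Dh c w cs u v = (\<chi> i. sqrt (w i) * ((c i \<bullet> v) / (2 * cs^2) + 2 * (c i \<bullet> u) * (c i \<bullet> v) / (8 * cs^4)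
                                       - 2 * (u \<bullet> v) / (4 * cs^2)))"

definition Hm :: "('q::finite \<Rightarrow> real^'d::finite) \<Rightarrow> ('q \<Rightarrow> real) \<Rightarrow> real \<Rightarrow> real^'d \<Rightarrow> real^'d \<Rightarrow> real^'q" where
  "Hm c w cs a b = (\<chi> i. sqrt (w i) * (2 * (c i \<bullet> a) * (c i \<bullet> b) / (8 * cs^4) - 2 * (a \<bullet> b) / (4 * cs^2)))"

lemma heq_comp: "heq c w cs u $ i = sqrt (w i) * (1 + (c i \<bullet> u) / (2 * cs^2) + (c i \<bullet> u)^2 / (8 * cs^4)
                                       - (u \<bullet> u) / (4 * cs^2))"
  by (simp add: heq_def power2_norm_eq_inner)

lemma heq_deriv:
  fixes c :: "'q::finite \<Rightarrow> real^'d::finite"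
  shows "(heq c w cs has_derivative Dh c w cs u) (at u)"
proof (subst has_derivative_componentwise_within, intro ballI)
  fix b :: "real^'q" assume "b \<in> Basis"
  then obtain j where b: "b = axis j 1" by (auto simp: Basis_vec_def)
  show "((\<lambda>x. heq c w cs x \<bullet> b) has_derivative (\<lambda>x. Dh c w cs u x \<bullet> b)) (at u)"
    unfolding b inner_axis heq_comp Dh_def vec_lambda_beta divide_inverse
    by (rule derivative_eq_intros refl | simp)+ (simp add: algebra_simps inner_commute)
qed

lemma Dh_deriv:
  fixes c :: "'q::finite \<Rightarrow> real^'d::finite"
  shows "((\<lambda>u. Dh c w cs u b) has_derivative (\<lambda>a. Hm c w cs a b)) (at u)"
proof (subst has_derivative_componentwise_within, intro ballI)
  fix e :: "real^'q" assume "e \<in> Basis"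
  then obtain j where b: "e = axis j 1" by (auto simp: Basis_vec_def)
  show "((\<lambda>x. Dh c w cs x b \<bullet> e) has_derivative (\<lambda>x. Hm c w cs x b \<bullet> e)) (at u)"
    unfolding b inner_axis Hm_def Dh_def vec_lambda_beta divide_inverse
    by (rule derivative_eq_intros refl | simp)+
qed

lemma linear_Dh: "linear (Dh c w cs u)"
  using heq_deriv has_derivative_linear by blast

lemma heq_expand:
  "heq c w cs (u + v) = heq c w cs u + Dh c w cs u v + (1/2) *\<^sub>R Hm c w cs v v"
  unfolding vec_eq_iff
proof
  fix i
  show "heq c w cs (u + v) $ i = (heq c w cs u + Dh c w cs u v + (1/2) *\<^sub>R Hm c w cs v v) $ i"
  proof (cases "cs = 0")
    case True then show ?thesis by (simp add: heq_comp Dh_def Hm_def inner_add_right inner_add_left inner_commute)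
  next
    case False
    define A where "A = c i \<bullet> u"
    define B where "B = c i \<bullet> v"
    define U where "U = u \<bullet> u"
    define V where "V = v \<bullet> v"
    define X where "X = u \<bullet> v"
    have "heq c w cs (u + v) $ i = sqrt (w i) * (1 + (A + B) / (2 * cs^2) + (A + B)^2 / (8 * cs^4)
                                       - (U + 2 * X + V) / (4 * cs^2))"
      by (simp add: heq_comp A_def B_def U_def V_def X_def inner_add_right inner_add_left inner_commute)
    also have "\<dots> = sqrt (w i) * (1 + A / (2 * cs^2) + A^2 / (8 * cs^4) - U / (4 * cs^2))
       + sqrt (w i) * (B / (2 * cs^2) + 2 * A * B / (8 * cs^4) - 2 * X / (4 * cs^2))
       + (1/2) * (sqrt (w i) * (2 * B * B / (8 * cs^4) - 2 * V / (4 * cs^2)))"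
      using False by (simp add: field_simps power2_eq_square)
    also have "\<dots> = (heq c w cs u + Dh c w cs u v + (1/2) *\<^sub>R Hm c w cs v v) $ i"
      by (simp add: heq_comp Dh_def Hm_def A_def B_def U_def V_def X_def)
    finally show ?thesis .
  qed
qed

lemma Hm_scale: "Hm c w cs (t *\<^sub>R a) (t *\<^sub>R a) = (t^2) *\<^sub>R Hm c w cs a a"
  unfolding vec_eq_iff by (simp add: Hm_def power2_eq_square field_simps)

lemma Hm_set_bdd:
  fixes c :: "'q::finite \<Rightarrow> real^'d::finite"
  shows "bdd_above {norm (Hm c w cs a b) | a b. norm a = 1 \<and> norm b = 1}"
proof -
  let ?f = "\<lambda>p::(real^'d)\<times>(real^'d). norm (Hm c w cs (fst p) (snd p))"
  have "continuous_on UNIV ?f"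
    unfolding Hm_def divide_inverse by (intro continuous_intros continuous_on_vec_lambda)
  then have "compact (?f ` (sphere (0::real^'d) 1 \<times> sphere (0::real^'d) 1))"
    by (intro compact_continuous_image compact_Times compact_sphere) (auto intro: continuous_on_subset)
  then have "bdd_above (?f ` (sphere (0::real^'d) 1 \<times> sphere (0::real^'d) 1))"
    by (intro bounded_imp_bdd_above compact_imp_bounded)
  then obtain K where K: "\<forall>p \<in> sphere (0::real^'d) 1 \<times> sphere (0::real^'d) 1. ?f p \<le> K"
    unfolding bdd_above_def by blast
  show ?thesis
  proof (rule bdd_aboveI)
    fix x assume "x \<in> {norm (Hm c w cs a b) | a b. norm a = 1 \<and> norm b = 1}"
    then obtain a b where "x = norm (Hm c w cs a b)" "norm a = 1" "norm b = 1" by blast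
    then show "x \<le> K" using K by (auto simp: mem_sphere_0)
  qed
qed

lemma hess_norm_eq:
  fixes c :: "'q::finite \<Rightarrow> real^'d::finite"
  shows "hess_norm c w cs = Sup {norm (Hm c w cs a b) | a b. norm a = 1 \<and> norm b = 1}"
proof -
  have "\<And>b a. frechet_derivative (\<lambda>u. frechet_derivative (heq c w cs) (at u) b) (at 0) a = Hm c w cs a b"
  proof -
    fix a b
    have e: "(\<lambda>u. frechet_derivative (heq c w cs) (at u) b) = (\<lambda>u. Dh c w cs u b)"
      using frechet_derivative_at[OF heq_deriv] by metis
    show "frechet_derivative (\<lambda>u. frechet_derivative (heq c w cs) (at u) b) (at 0) a = Hm c w cs a b"
      unfolding e using frechet_derivative_at[OF Dh_deriv, of c w cs b 0] by metis
  qed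
  then show ?thesis unfolding hess_norm_def by simp
qed

lemma hess_norm_nonneg:
  fixes c :: "'q::finite \<Rightarrow> real^'d::finite"
  shows "0 \<le> hess_norm c w cs"
proof -
  obtain e :: "real^'d" where e: "e \<in> Basis" by (meson ex_in_conv nonempty_Basis)
  then have "norm e = 1" by simp
  then have "norm (Hm c w cs e e) \<in> {norm (Hm c w cs a b) | a b. norm a = 1 \<and> norm b = 1}" by blast
  then have "norm (Hm c w cs e e) \<le> hess_norm c w cs"
    unfolding hess_norm_eq by (intro cSup_upper Hm_set_bdd)
  then show ?thesis using norm_ge_zero order_trans by blast
qed

lemma Hm_bound:
  fixes c :: "'q::finite \<Rightarrow> real^'d::finite"
  shows "norm (Hm c w cs v v) \<le> hess_norm c w cs * (norm v)^2"
proof (cases "v = 0")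
  case True
  have "Hm c w cs 0 0 = 0" by (simp add: Hm_def vec_eq_iff)
  then show ?thesis using True by simp
next
  case False
  define a where "a = (1 / norm v) *\<^sub>R v"
  have na: "norm a = 1" using False by (simp add: a_def)
  have v: "v = norm v *\<^sub>R a" using False by (simp add: a_def)
  have "norm (Hm c w cs a a) \<in> {norm (Hm c w cs a b) | a b. norm a = 1 \<and> norm b = 1}" using na by blast
  then have "norm (Hm c w cs a a) \<le> hess_norm c w cs"
    unfolding hess_norm_eq by (intro cSup_upper Hm_set_bdd)
  moreover have "Hm c w cs v v = (norm v)^2 *\<^sub>R Hm c w cs a a"
    by (subst v, subst v, rule Hm_scale)
  ultimately show ?thesis
    using mult_left_mono[of "norm (Hm c w cs a a)" "hess_norm c w cs" "(norm v)^2"]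
    by (simp add: mult.commute)
qed

lemma geq_deriv:
  fixes c :: "'q::finite \<Rightarrow> real^'d::finite"
  assumes "\<rho> > 0"
  shows "(geq c w cs has_derivative
           (\<lambda>p. (fst p / (2 * sqrt \<rho>)) *\<^sub>R heq c w cs u + sqrt \<rho> *\<^sub>R Dh c w cs u (snd p))) (at (\<rho>, u))"
proof -
  have g: "geq c w cs = (\<lambda>x. sqrt (fst x) *\<^sub>R heq c w cs (snd x))"
    by (auto simp: geq_def)
  have s: "((\<lambda>x::real\<times>(real^'d). sqrt (fst x)) has_derivative (\<lambda>p. fst p / (2 * sqrt \<rho>))) (at (\<rho>, u))"
    using assms by (auto intro!: derivative_eq_intros simp: field_simps)
  have h: "((\<lambda>x::real\<times>(real^'d). heq c w cs (snd x)) has_derivative (\<lambda>p. Dh c w cs u (snd p))) (at (\<rho>, u))"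
  proof -
    have h0: "(heq c w cs has_derivative Dh c w cs u) (at (snd (\<rho>,u)))" using heq_deriv by simp
    show ?thesis using has_derivative_compose[OF has_derivative_snd[OF has_derivative_ident] h0] by simp
  qed
  show ?thesis unfolding g
    using has_derivative_scaleR[OF s h] by (simp add: add.commute)
qed

lemma orth_proj_ex:
  fixes S :: "'a::euclidean_space set"
  assumes "subspace S"
  shows "\<exists>p. p \<in> S \<and> (\<forall>v\<in>S. (x - p) \<bullet> v = 0)"
proof -
  obtain y z where "y \<in> span S" "\<And>w. w \<in> span S \<Longrightarrow> orthogonal z w" "x = y + z"
    using orthogonal_subspace_decomp_exists by blast
  moreover have "span S = S" using assms span_eq_iff by blast
  ultimately show ?thesis
    by (intro exI[of _ y]) (auto simp: orthogonal_def)
qed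

lemma orth_proj_unique:
  fixes S :: "'a::euclidean_space set"
  assumes "subspace S" "p \<in> S" "\<forall>v\<in>S. (x - p) \<bullet> v = 0" "p' \<in> S" "\<forall>v\<in>S. (x - p') \<bullet> v = 0"
  shows "p = p'"
proof -
  have "p - p' \<in> S" using assms subspace_diff by blast
  then have "(x - p') \<bullet> (p - p') - (x - p) \<bullet> (p - p') = 0" using assms by simp
  then have "(p - p') \<bullet> (p - p') = 0" by (simp add: algebra_simps)
  then show ?thesis by simp
qed

lemma orth_proj_prop:
  fixes S :: "'a::euclidean_space set"
  assumes "subspace S"
  shows "orth_proj S x \<in> S \<and> (\<forall>v\<in>S. (x - orth_proj S x) \<bullet> v = 0)"
  unfolding orth_proj_def
  using theI'[of "\<lambda>p. p \<in> S \<and> (\<forall>v\<in>S. (x - p) \<bullet> v = 0)"] orth_proj_ex[OF assms, of x]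
    orth_proj_unique[OF assms] by blast

lemma orth_proj_id:
  fixes S :: "'a::euclidean_space set"
  assumes "subspace S" "x \<in> S"
  shows "orth_proj S x = x"
proof -
  have "\<forall>v\<in>S. (x - x) \<bullet> v = 0" by simp
  then show ?thesis
    using orth_proj_prop[OF assms(1), of x] orth_proj_unique[OF assms(1)] assms(2) by blast
qed

lemma orth_proj_dist:
  fixes S :: "'a::euclidean_space set"
  assumes "subspace S" "s \<in> S"
  shows "norm (orth_proj S x - s) \<le> norm (x - s)"
proof -
  let ?p = "orth_proj S x"
  have p: "?p \<in> S" "\<forall>v\<in>S. (x - ?p) \<bullet> v = 0" using orth_proj_prop[OF assms(1)] by auto
  have "?p - s \<in> S" using p assms subspace_diff by blast
  then have o: "orthogonal (?p - s) (x - ?p)" unfolding orthogonal_def using p(2) inner_commute by metis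
  have "x - s = (?p - s) + (x - ?p)" by simp
  then have "(norm (x - s))^2 = (norm (?p - s))^2 + (norm (x - ?p))^2"
    using norm_add_Pythagorean[OF o] by simp
  then have "(norm (?p - s))^2 \<le> (norm (x - s))^2" by simp
  then show ?thesis using power2_le_imp_le by fastforce
qed

lemma sigma_min_prop:
  fixes A :: "'a::euclidean_space \<Rightarrow> 'b::euclidean_space"
  assumes "linear A" "inj A"
  shows "sigma_min A > 0 \<and> (\<forall>x. sigma_min A * norm x \<le> norm (A x))"
proof -
  obtain B where B: "B > 0" "\<And>x. B * norm x \<le> norm (A x)"
    using linear_inj_bounded_below_pos[OF assms] by blast
  let ?S = "{norm (A z) | z. norm z = 1}"
  obtain e :: 'a where e: "e \<in> Basis" by (meson ex_in_conv nonempty_Basis)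
  have ne: "?S \<noteq> {}" using e norm_Basis by blast
  have bdd: "bdd_below ?S" by (rule bdd_belowI[of _ 0]) auto
  have "B \<le> sigma_min A" unfolding sigma_min_def
  proof (rule cInf_greatest[OF ne])
    fix t assume "t \<in> ?S"
    then obtain z where z: "norm z = 1" "t = norm (A z)" by blast
    show "B \<le> t" using B(2)[of z] z by simp
  qed
  moreover have "sigma_min A * norm x \<le> norm (A x)" for x
  proof (cases "x = 0")
    case True then show ?thesis by simp
  next
    case False
    define y where "y = (1 / norm x) *\<^sub>R x"
    have "norm y = 1" using False by (simp add: y_def)
    then have "sigma_min A \<le> norm (A y)" unfolding sigma_min_def
      by (intro cInf_lower bdd) blast
    also have "norm (A y) = norm (A x) / norm x"
      using False by (simp add: y_def linear_scale[OF assms(1)])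
    finally show ?thesis using False by (simp add: field_simps)
  qed
  ultimately show ?thesis using B by auto
qed

lemma pinv_inj:
  assumes "inj A"
  shows "pinv A (A z) = z"
  unfolding pinv_def
proof (rule the_equality)
  have l: "lsq_sol A (A z) z' \<longleftrightarrow> z' = z" for z'
  proof
    assume "lsq_sol A (A z) z'"
    then have "norm (A z' - A z) \<le> norm (A z - A z)" unfolding lsq_sol_def by blast
    then have "norm (A z' - A z) = 0" by simp
    then have "A z' = A z" by (simp only: norm_eq_zero right_minus_eq)
    then show "z' = z" using assms by (simp only: inj_eq)
  qed (simp add: lsq_sol_def)
  show "lsq_sol A (A z) z \<and> (\<forall>z'. lsq_sol A (A z) z' \<longrightarrow> norm z \<le> norm z')" using l by auto
  show "\<And>za. lsq_sol A (A z) za \<and> (\<forall>z'. lsq_sol A (A z) z' \<longrightarrow> norm za \<le> norm z') \<Longrightarrow> za = z"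
    using l by auto
qed

lemma sq_dist_expand:
  fixes h g :: "'a::real_inner"
  shows "(norm (t *\<^sub>R h - g))^2 = t^2 * (norm h)^2 - 2 * t * (h \<bullet> g) + (norm g)^2"
  unfolding power2_norm_eq_inner by (simp add: inner_diff_left inner_diff_right inner_commute power2_eq_square algebra_simps)

lemma part2:
  fixes h g :: "'a::real_inner"
  assumes pos: "h \<bullet> g > 0"
  shows "let \<rho>s = ((h \<bullet> g) / (norm h)^2)^2
             in \<rho>s > 0 \<and> (\<forall>\<rho>h>0. norm (sqrt \<rho>s *\<^sub>R h - g) \<le> norm (sqrt \<rho>h *\<^sub>R h - g)) \<and>
                (\<forall>\<theta>. cos \<theta> = (h \<bullet> g) / (norm h * norm g)
                      \<longrightarrow> norm (sqrt \<rho>s *\<^sub>R h - g) = norm g * \<bar>sin \<theta>\<bar>)"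
proof -
  have h0: "h \<noteq> 0" using pos by auto
  have g0: "g \<noteq> 0" using pos by auto
  have nh: "norm h > 0" using h0 by simp
  have ng: "norm g > 0" using g0 by simp
  define ts where "ts = (h \<bullet> g) / (norm h)^2"
  have tsp: "ts > 0" using pos nh by (simp add: ts_def)
  have sq: "sqrt (ts^2) = ts" using tsp by simp
  have min: "(norm (ts *\<^sub>R h - g))^2 = (norm g)^2 - (h \<bullet> g)^2 / (norm h)^2"
    unfolding sq_dist_expand ts_def using nh by (simp add: field_simps power2_eq_square)
  have le: "norm (ts *\<^sub>R h - g) \<le> norm (t *\<^sub>R h - g)" for t
  proof -
    have "(norm (t *\<^sub>R h - g))^2 - (norm (ts *\<^sub>R h - g))^2 = (norm h)^2 * (t - ts)^2"
      unfolding sq_dist_expand ts_def using nh by (simp add: field_simps power2_eq_square)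
    then have "(norm (ts *\<^sub>R h - g))^2 \<le> (norm (t *\<^sub>R h - g))^2"
      by (metis diff_ge_0_iff_ge zero_le_mult_iff zero_le_power2)
    then show ?thesis using power2_le_imp_le by fastforce
  qed
  have sinpart: "norm (ts *\<^sub>R h - g) = norm g * \<bar>sin \<theta>\<bar>"
    if c: "cos \<theta> = (h \<bullet> g) / (norm h * norm g)" for \<theta>
  proof -
    have "(norm g * \<bar>sin \<theta>\<bar>)^2 = (norm g)^2 * (1 - (cos \<theta>)^2)"
      by (simp add: power_mult_distrib sin_squared_eq)
    also have "\<dots> = (norm g)^2 - (h \<bullet> g)^2 / (norm h)^2"
      unfolding c using nh ng by (simp add: field_simps power2_eq_square)
    finally have "(norm (ts *\<^sub>R h - g))^2 = (norm g * \<bar>sin \<theta>\<bar>)^2" using min by simp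
    then show ?thesis
      by (simp add: power2_eq_iff_nonneg)
  qed
  show ?thesis unfolding Let_def ts_def[symmetric] sq
    using tsp le sinpart by simp
qed

lemma part1:
  fixes c :: "'q::finite \<Rightarrow> real^'d::finite" and w :: "'q \<Rightarrow> real" and cs :: real
    and uh :: "real^'d" and gt :: "real^'q"
  assumes rank: "inj (Jbar c w cs uh)"
    and rpos: "\<rho>h > 0" and NK: "NK_conditions c w cs uh gt \<rho>h \<mu>"
  shows "Eperp c w cs uh gt
              \<le> 2 * (beta c w cs (\<rho>h, uh))^2 * (Delta c w cs uh gt \<rho>h)^2 * hess_norm c w cs
                 * sqrt (\<rho>h + 2 * beta c w cs (\<rho>h, uh) * Delta c w cs uh gt \<rho>h)"
proof -
  define h where "h = heq c w cs uh"
  define L where "L = Dh c w cs uh"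
  define J where "J = Jbar c w cs uh"
  define S where "S = range J"
  define s where "s = sqrt \<rho>h"
  have sp: "s > 0" using rpos by (simp add: s_def)
  have ss: "s * s = \<rho>h" using rpos by (simp add: s_def)
  define G where "G = (\<lambda>p::real \<times> (real^'d). (fst p / (2 * s)) *\<^sub>R h + s *\<^sub>R L (snd p))"
  have linL: "linear L" unfolding L_def by (rule linear_Dh)
  have J_eq: "J = (\<lambda>p. fst p *\<^sub>R h + L (snd p))"
    unfolding J_def Jbar_def h_def L_def frechet_derivative_at[OF heq_deriv, symmetric]
    by (auto simp: case_prod_beta)
  have linJ: "linear J" unfolding J_eq
    by (rule linearI) (auto simp: linear_add[OF linL] linear_scale[OF linL] algebra_simps scaleR_add_left)
  have subS: "subspace S" unfolding S_def using linear_subspace_image[OF linJ subspace_UNIV] by simp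
  have Gder: "(geq c w cs has_derivative G) (at (\<rho>h, uh))"
    unfolding G_def s_def h_def L_def by (rule geq_deriv[OF rpos])
  have GD: "nabla_g c w cs (\<rho>h, uh) = G"
    unfolding nabla_g_def using frechet_derivative_at[OF Gder] by simp
  have linG: "linear G" using has_derivative_linear[OF Gder] .
  have G_J: "G p = J (fst p / (2 * s), s *\<^sub>R snd p)" for p
    unfolding G_def J_eq by (simp add: linear_scale[OF linL])
  have injG: "inj G"
  proof (rule injI)
    fix p q assume "G p = G q"
    then have "J (fst p / (2 * s), s *\<^sub>R snd p) = J (fst q / (2 * s), s *\<^sub>R snd q)" by (simp add: G_J)
    then have "(fst p / (2 * s), s *\<^sub>R snd p) = (fst q / (2 * s), s *\<^sub>R snd q)"
      using rank unfolding J_def by (simp only: inj_eq)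
    then have "fst p = fst q" "snd p = snd q" using sp by auto
    then show "p = q" by (simp add: prod_eq_iff)
  qed
  define P where "P = Dproj c w cs uh"
  have P_eq: "P = orth_proj S" unfolding P_def Dproj_def S_def J_def ..
  define y where "y = P gt"
  have yS: "y \<in> S" unfolding y_def P_eq using orth_proj_prop[OF subS] by blast
  then obtain a1 b1 where y: "y = a1 *\<^sub>R h + L b1" unfolding S_def J_eq by auto
  define g0 where "g0 = s *\<^sub>R h"
  have geq0: "geq c w cs (\<rho>h, uh) = g0" unfolding geq_def g0_def s_def h_def by simp
  have g0S: "g0 \<in> S" unfolding S_def J_eq g0_def
    using linear_0[OF linL] by (auto intro!: image_eqI[of _ _ "(s, 0)"])
  have Pg0: "P g0 = g0" unfolding P_eq using orth_proj_id[OF subS g0S] .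
  define \<Delta> where "\<Delta> = Delta c w cs uh gt \<rho>h"
  have Delta_eq: "\<Delta> = norm (g0 - gt)" unfolding \<Delta>_def Delta_def g0_def s_def h_def ..
  have ydist: "norm (y - g0) \<le> \<Delta>"
    unfolding y_def P_eq Delta_eq using orth_proj_dist[OF subS g0S, of gt] by (simp add: norm_minus_commute)
  define z where "z = (2 * s * (a1 - s), (1 / s) *\<^sub>R b1)"
  have Gz: "G z = y - g0"
  proof -
    have co: "2 * s * (a1 - s) / (2 * s) = a1 - s" using sp by simp
    show ?thesis unfolding G_def z_def y g0_def using sp
      by (simp only: fst_conv snd_conv co linear_scale[OF linL] scaleR_scaleR) (simp add: scaleR_diff_left)
  qed
  have sig: "sigma_min G > 0" "\<And>x. sigma_min G * norm x \<le> norm (G x)"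
    using sigma_min_prop[OF linG injG] by auto
  define \<beta> where "\<beta> = beta c w cs (\<rho>h, uh)"
  have beta_eq: "\<beta> = 1 / sigma_min G" unfolding \<beta>_def beta_def GD ..
  have bpos: "\<beta> > 0" using sig(1) beta_eq by simp
  have Dnn: "\<Delta> \<ge> 0" unfolding Delta_eq by simp
  have zb: "norm z \<le> \<beta> * \<Delta>"
  proof -
    have "sigma_min G * norm z \<le> \<Delta>" using sig(2)[of z] ydist Gz by simp
    then show ?thesis unfolding beta_eq using sig(1) by (simp add: field_simps)
  qed
  have Fm: "Fmap c w cs uh (\<rho>h, uh) = g0" unfolding Fmap_def using Pg0 geq0 P_def by simp
  have z0: "z0 c w cs uh gt \<rho>h = - z"
  proof -
    have "Fmap c w cs uh (\<rho>h, uh) - Dproj c w cs uh gt = G (- z)"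
      using Fm Gz linear_neg[OF linG] unfolding y_def P_def by simp
    then show ?thesis unfolding z0_def GD using pinv_inj[OF injG] by simp
  qed
  have ballc: "ball ((\<rho>h, uh) + z) (norm z) \<subseteq> {0<..} \<times> UNIV"
    using NK unfolding NK_conditions_def Let_def z0 by simp
  have key: "\<rho>h + fst z \<ge> norm z"
  proof (rule ccontr)
    assume A: "\<not> \<rho>h + fst z \<ge> norm z"
    define t where "t = max 0 (\<rho>h + fst z)"
    have fz: "norm z \<ge> \<bar>fst z\<bar>" using norm_fst_le[of "fst z" "snd z"] by simp
    have tlt: "t < norm z" using A fz rpos by (auto simp: t_def)
    have t0: "t \<ge> 0" by (simp add: t_def)
    define p where "p = ((\<rho>h, uh) + z) - (t, 0)"
    have "dist ((\<rho>h, uh) + z) p = t" unfolding p_def dist_norm using t0 by simp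
    then have "p \<in> ball ((\<rho>h, uh) + z) (norm z)" using tlt by simp
    then have "fst p > 0" using ballc by auto
    moreover have "fst p \<le> 0" unfolding p_def t_def by simp
    ultimately show False by simp
  qed
  have fz: "norm z \<ge> \<bar>fst z\<bar>" using norm_fst_le[of "fst z" "snd z"] by simp
  have fzb: "fst z \<ge> - \<rho>h / 2" using key fz by linarith
  have a1b: "a1 \<ge> 3/4 * s"
  proof -
    have "2 * s * (a1 - s) \<ge> - (s * s) / 2" using fzb ss by (simp add: z_def)
    then have "2 * s * (a1 - s) \<ge> 2 * s * (- s / 4)" by simp
    then have "a1 - s \<ge> - s / 4" using sp mult_le_cancel_left_pos[of "2 * s" "- s / 4" "a1 - s"] by simp
    then show ?thesis by simp
  qed
  have a1p: "a1 > 0" using a1b sp by simp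
  define v where "v = (1 / a1) *\<^sub>R b1"
  have gpt: "geq c w cs (a1^2, uh + v) = y + (a1 / 2) *\<^sub>R Hm c w cs v v"
  proof -
    have "geq c w cs (a1^2, uh + v) = a1 *\<^sub>R heq c w cs (uh + v)"
      unfolding geq_def using a1p by simp
    also have "\<dots> = a1 *\<^sub>R (h + L v + (1/2) *\<^sub>R Hm c w cs v v)"
      unfolding heq_expand h_def L_def ..
    also have "\<dots> = y + (a1 / 2) *\<^sub>R Hm c w cs v v"
      unfolding y v_def using a1p by (simp add: linear_scale[OF linL] scaleR_add_right)
    finally show ?thesis .
  qed
  define Hn where "Hn = hess_norm c w cs"
  have Hnn: "Hn \<ge> 0" unfolding Hn_def by (rule hess_norm_nonneg)
  have E1: "Eperp c w cs uh gt \<le> a1 / 2 * norm (Hm c w cs v v)"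
  proof -
    have e1: "norm (P gt - geq c w cs (a1^2, uh + v)) = a1 / 2 * norm (Hm c w cs v v)"
      unfolding gpt y_def[symmetric] using a1p by simp
    have e2: "norm (P gt - geq c w cs (a1^2, uh + v))
        \<in> {norm (Dproj c w cs uh gt - geq c w cs (\<rho>, u)) | \<rho> u. \<rho> \<ge> 0}"
      unfolding P_def by (intro CollectI exI[of _ "a1^2"] exI[of _ "uh + v"]) simp
    have e3: "bdd_below {norm (Dproj c w cs uh gt - geq c w cs (\<rho>, u)) | \<rho> u. \<rho> \<ge> 0}"
      by (rule bdd_belowI[of _ 0]) auto
    show ?thesis unfolding Eperp_def using cInf_lower[OF e2 e3] e1 by simp
  qed
  have nv: "norm v = norm b1 / a1" unfolding v_def using a1p by simp
  have nb: "norm b1 \<le> s * (\<beta> * \<Delta>)"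
  proof -
    have "norm b1 = s * norm (snd z)" unfolding z_def using sp by simp
    also have "\<dots> \<le> s * norm z" using norm_snd_le[of "snd z" "fst z"] sp by simp
    also have "\<dots> \<le> s * (\<beta> * \<Delta>)" using zb sp by simp
    finally show ?thesis .
  qed
  have E2: "a1 / 2 * norm (Hm c w cs v v) \<le> Hn * (norm b1)^2 / (2 * a1)"
  proof -
    have "a1 / 2 * norm (Hm c w cs v v) \<le> a1 / 2 * (Hn * (norm v)^2)"
      using Hm_bound[of c w cs v] a1p unfolding Hn_def by simp
    also have "\<dots> = Hn * (norm b1)^2 / (2 * a1)" unfolding nv using a1p
      by (simp add: field_simps power2_eq_square)
    finally show ?thesis .
  qed
  have E3: "Hn * (norm b1)^2 / (2 * a1) \<le> Hn * (s * (\<beta> * \<Delta>))^2 / (3/2 * s)"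
  proof -
    have "(norm b1)^2 \<le> (s * (\<beta> * \<Delta>))^2" using nb by (simp add: power_mono)
    then have "Hn * (norm b1)^2 \<le> Hn * (s * (\<beta> * \<Delta>))^2" using Hnn by (simp add: mult_left_mono)
    moreover have "3/2 * s \<le> 2 * a1" using a1b by simp
    ultimately show ?thesis using sp Hnn
      by (intro frac_le) auto
  qed
  have E4: "Hn * (s * (\<beta> * \<Delta>))^2 / (3/2 * s) \<le> 2 * \<beta>^2 * \<Delta>^2 * Hn * sqrt (\<rho>h + 2 * \<beta> * \<Delta>)"
  proof -
    have "Hn * (s * (\<beta> * \<Delta>))^2 / (3/2 * s) = (2/3) * (\<beta>^2 * \<Delta>^2 * Hn) * s"
      using sp by (simp add: field_simps power2_eq_square)
    also have "\<dots> \<le> 2 * (\<beta>^2 * \<Delta>^2 * Hn) * s" using sp Hnn by simp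
    also have "\<dots> \<le> 2 * (\<beta>^2 * \<Delta>^2 * Hn) * sqrt (\<rho>h + 2 * \<beta> * \<Delta>)"
      using bpos Dnn Hnn unfolding s_def by (intro mult_left_mono) auto
    finally show ?thesis by (simp add: mult.assoc)
  qed
  show ?thesis using E1 E2 E3 E4 unfolding \<beta>_def[symmetric] \<Delta>_def[symmetric] Hn_def[symmetric] by linarith
qed

theorem theorem2:
  fixes c :: "'q::finite \<Rightarrow> real^'d::finite" and w :: "'q \<Rightarrow> real" and cs :: real
    and uh :: "real^'d" and gt :: "real^'q"
  assumes lat: "lattice_isotropic c w cs"
    and rank: "inj (Jbar c w cs uh)"
  shows "(\<forall>\<rho>h \<mu>. \<rho>h > 0 \<and> NK_conditions c w cs uh gt \<rho>h \<mu> \<longrightarrow>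
            Eperp c w cs uh gt
              \<le> 2 * (beta c w cs (\<rho>h, uh))^2 * (Delta c w cs uh gt \<rho>h)^2 * hess_norm c w cs
                 * sqrt (\<rho>h + 2 * beta c w cs (\<rho>h, uh) * Delta c w cs uh gt \<rho>h))
       \<and> (heq c w cs uh \<bullet> gt > 0 \<longrightarrow>
            (let \<rho>s = ((heq c w cs uh \<bullet> gt) / (norm (heq c w cs uh))^2)^2
             in \<rho>s > 0 \<and> (\<forall>\<rho>h>0. Delta c w cs uh gt \<rho>s \<le> Delta c w cs uh gt \<rho>h) \<and>
                (\<forall>\<theta>. cos \<theta> = (heq c w cs uh \<bullet> gt) / (norm (heq c w cs uh) * norm gt)
                      \<longrightarrow> Delta c w cs uh gt \<rho>s = norm gt * \<bar>sin \<theta>\<bar>)))"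
proof (intro conjI allI impI)
  fix \<rho>h \<mu> assume "\<rho>h > 0 \<and> NK_conditions c w cs uh gt \<rho>h \<mu>"
  then show "Eperp c w cs uh gt
              \<le> 2 * (beta c w cs (\<rho>h, uh))^2 * (Delta c w cs uh gt \<rho>h)^2 * hess_norm c w cs
                 * sqrt (\<rho>h + 2 * beta c w cs (\<rho>h, uh) * Delta c w cs uh gt \<rho>h)"
    using part1[OF rank] by blast
next
  assume "heq c w cs uh \<bullet> gt > 0"
  then show "let \<rho>s = ((heq c w cs uh \<bullet> gt) / (norm (heq c w cs uh))^2)^2
             in \<rho>s > 0 \<and> (\<forall>\<rho>h>0. Delta c w cs uh gt \<rho>s \<le> Delta c w cs uh gt \<rho>h) \<and>
                (\<forall>\<theta>. cos \<theta> = (heq c w cs uh \<bullet> gt) / (norm (heq c w cs uh) * norm gt)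
                      \<longrightarrow> Delta c w cs uh gt \<rho>s = norm gt * \<bar>sin \<theta>\<bar>)"
    unfolding Delta_def by (rule part2)
qed

end
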